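(* For $0<\rho<1$ and integers $k\ge2$ define $$\begin{aligned}a_k(\rho) ={}& \frac{4\sqrt{1+\rho^2}}{9} \binom{\frac{3}{2}}{k+1} (-1)^{k+1} \Big(\frac{2\rho^2}{3(1+\rho^2)}\Big)^{k}+\frac{\sqrt{1+\rho^2}}{3} \binom{\frac{1}{2}}{2k}\Big(\frac{2\rho}{1+\rho^2}\Big)^{2k} -\frac{28}{15\sqrt{1+\rho^2}}\binom{\frac{1}{2}}{2k+2}\Big(\frac{2\rho}{1+\rho^2}\Big)^{2k}\\&+\frac{10\rho^2+1}{15\sqrt{1+\rho^2}}\binom{\frac{1}{2}}{2k+1}\Big(\frac{2\rho}{1+\rho^2}\Big)^{2k} -\frac{\rho\sqrt{1+\rho^2}}{6}\binom{\frac{1}{2}}{2k-1}\Big(\frac{2\rho}{1+\rho^2}\Big)^{2k-1}-\frac{8}{5\sqrt{1+\rho^2}}\binom{\frac{1}{2}}{2k+3}\Big(\frac{2\rho}{1+\rho^2}\Big)^{2k}.\end{aligned}$$ Then $a_k(\rho)<0$ for all integers $k\ge2$ and all $0<\rho<1$.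
   Context: For real $a$ and integer $m\ge0$, $\binom{a}{m}=\frac{a(a-1)\cdots(a-m+1)}{m!}$ is the generalized binomial coefficient. *)

theory Defs
  imports Complex_Main
begin

definition a_coef :: "nat \<Rightarrow> real \<Rightarrow> real" where
  "a_coef k \<rho> =
     4 * sqrt (1 + \<rho>^2) / 9 * ((3/2::real) gchoose (k+1)) * (-1)^(k+1)
        * (2*\<rho>^2 / (3*(1+\<rho>^2)))^k
   + sqrt (1 + \<rho>^2) / 3 * ((1/2::real) gchoose (2*k)) * (2*\<rho>/(1+\<rho>^2))^(2*k)
   - 28 / (15 * sqrt (1 + \<rho>^2)) * ((1/2::real) gchoose (2*k+2)) * (2*\<rho>/(1+\<rho>^2))^(2*k)
   + (10*\<rho>^2 + 1) / (15 * sqrt (1 + \<rho>^2)) * ((1/2::real) gchoose (2*k+1)) * (2*\<rho>/(1+\<rho>^2))^(2*k)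
   - \<rho> * sqrt (1 + \<rho>^2) / 6 * ((1/2::real) gchoose (2*k-1)) * (2*\<rho>/(1+\<rho>^2))^(2*k-1)
   - 8 / (5 * sqrt (1 + \<rho>^2)) * ((1/2::real) gchoose (2*k+3)) * (2*\<rho>/(1+\<rho>^2))^(2*k)"

end

theory Submission
  imports Defs
begin
lemma gch_Suc: "(a::real) gchoose (Suc n) = (a gchoose n) * (a - of_nat n) / of_nat (Suc n)"
proof -
  have "fact (Suc n) * (a gchoose Suc n) = (\<Prod>i = 0..<Suc n. a - of_nat i)" by (rule gbinomial_mult_fact)
  also have "\<dots> = (\<Prod>i = 0..<n. a - of_nat i) * (a - of_nat n)" by simp
  also have "\<dots> = fact n * ((a gchoose n) * (a - of_nat n))" by (simp add: gbinomial_mult_fact)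
  finally have "fact n * ((a gchoose Suc n) * of_nat (Suc n)) = fact n * ((a gchoose n) * (a - of_nat n))"
    by (simp add: fact_Suc algebra_simps del: of_nat_Suc)
  then have "(a gchoose Suc n) * of_nat (Suc n) = (a gchoose n) * (a - of_nat n)" by simp
  then show ?thesis by (simp add: field_simps del: of_nat_Suc)
qed

lemma pow3_nat: "k \<ge> 3 \<Longrightarrow> (k::nat) ^ 3 \<le> 3 ^ k"
proof (induction k rule: dec_induct)
  case base then show ?case by simp
next
  case (step n)
  have "(Suc n) ^ 3 \<le> 3 * n ^ 3"
  proof -
    have "n*n*n \<ge> 3*n*n" using step by simp
    moreover have "n*n \<ge> 3*n" using step by simp
    moreover have "n \<ge> 3" using step by simp
    moreover have "(Suc n)^3 = n*n*n + 3*(n*n) + 3*n + 1" by (simp add: power3_eq_cube algebra_simps)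
    moreover have "n^3 = n*n*n" by (simp add: power3_eq_cube)
    ultimately show ?thesis by linarith
  qed
  then show ?case using step by simp
qed

lemma pow3: "k \<ge> 2 \<Longrightarrow> real k ^ 3 \<le> 3 ^ k"
proof (cases "k = 2")
  case True then show ?thesis by simp
next
  case False
  assume "k \<ge> 2" then have "k \<ge> 3" using False by simp
  from pow3_nat[OF this] have "real (k^3) \<le> real (3^k)" by (simp only: of_nat_le_iff)
  then show ?thesis by simp
qed

lemma quad_pos:
  fixes al be ga t :: real
  assumes "al > 0" "4*al*ga - be^2 > 0"
  shows "al*t^2 + be*t + ga > 0"
proof -
  have "4*al*(al*t^2 + be*t + ga) = (2*al*t+be)^2 + (4*al*ga - be^2)" by (simp add: power2_eq_square algebra_simps)
  also have "\<dots> > 0" using assms by (smt (verit) zero_le_power2)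
  finally have "0 < 4*al*(al*t^2 + be*t + ga)" .
  then show ?thesis using assms by (simp add: zero_less_mult_iff)
qed

lemma e_step: "((3/2::real) gchoose (Suc k + 1)) * (-1)^(Suc k + 1)
   = ((3/2::real) gchoose (k + 1)) * (-1)^(k + 1) * ((real k - 1/2) / (real k + 2))"
  by (simp add: gch_Suc field_simps)

lemma b_step: "k \<ge> 1 \<Longrightarrow> ((1/2::real) gchoose (2 * Suc k - 1))
   = ((1/2::real) gchoose (2*k - 1)) * ((4*real k - 3)*(4*real k - 1) / (4*real k*(4*real k + 2)))"
proof -
  assume k: "k \<ge> 1"
  define j where "j = 2*k-1"
  have e: "2 * Suc k - 1 = Suc (Suc j)" using k unfolding j_def by simp
  have rj: "real j = 2*real k - 1" using k unfolding j_def by (simp add: of_nat_diff)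
  have "((1/2::real) gchoose Suc (Suc j)) = ((1/2::real) gchoose j) * (((1/2 - real j)/(real j + 1)) * ((1/2 - (real j + 1))/(real j + 2)))"
    by (simp add: gch_Suc add_ac)
  also have "((1/2 - real j)/(real j + 1)) * ((1/2 - (real j + 1))/(real j + 2)) = (4*real k - 3)*(4*real k - 1) / (4*real k*(4*real k + 2))"
    unfolding rj using k by (simp add: field_simps)
  finally show ?thesis unfolding e j_def by simp
qed

lemma eb_bound: "k \<ge> 2 \<Longrightarrow> 0 \<le> ((3/2::real) gchoose (k + 1)) * (-1)^(k + 1)
   \<and> ((3/2::real) gchoose (k + 1)) * (-1)^(k + 1) \<le> ((1/2::real) gchoose (2*k - 1))
   \<and> 0 < ((1/2::real) gchoose (2*k - 1))"
proof (induction k rule: dec_induct)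
  case base
  then show ?case by (simp add: gch_Suc numeral_3_eq_3)
next
  case (step n)
  define e where "e = ((3/2::real) gchoose (n + 1)) * (-1)^(n + 1)"
  define b where "b = ((1/2::real) gchoose (2*n - 1))"
  have n: "real n \<ge> 2" using step by simp
  have IH: "0 \<le> e" "e \<le> b" "0 < b" using step unfolding e_def b_def by auto
  have r: "(real n - 1/2) / (real n + 2) \<le> (4*real n - 3)*(4*real n - 1) / (4*real n*(4*real n + 2))"
  proof -
    have "(real n - 1/2) * (4*real n*(4*real n + 2)) \<le> (4*real n - 3)*(4*real n - 1) * (real n + 2)"
    proof -
      have "(4*real n - 3)*(4*real n - 1) * (real n + 2) - (real n - 1/2) * (4*real n*(4*real n + 2)) = real n * (16 * real n - 25) + 6"
        by (simp add: algebra_simps)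
      moreover have "real n * (16 * real n - 25) \<ge> 0" using n by simp
      ultimately show ?thesis by linarith
    qed
    then show ?thesis using n by (simp add: divide_simps) (simp add: algebra_simps)
  qed
  have p1: "0 \<le> (real n - 1/2) / (real n + 2)" using n by simp
  have p2: "0 < (4*real n - 3)*(4*real n - 1) / (4*real n*(4*real n + 2))" using n by simp
  have n1: "n \<ge> 1" using step by simp
  define p where "p = (real n - 1/2) / (real n + 2)"
  define q where "q = (4*real n - 3)*(4*real n - 1) / (4*real n*(4*real n + 2))"
  have "0 \<le> e * p" using IH(1) p1 unfolding p_def by (rule mult_nonneg_nonneg)
  moreover have "e * p \<le> b * q" using IH r p1 p2 unfolding p_def q_def by (intro mult_mono) auto
  moreover have "0 < b * q" using IH(3) p2 unfolding q_def by (rule mult_pos_pos)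
  ultimately show ?case
    unfolding e_step b_step[OF n1] e_def[symmetric] b_def[symmetric] p_def[symmetric] q_def[symmetric]
    by simp
qed

lemma G_pos:
  fixes K t :: real
  assumes K: "K \<ge> 2"
  shows "(576*K^4 + 2112*K^5 + 2304*K^6 + 768*K^7)*t^2 + (-3072*K - 11264*K^2 - 15744*K^3 - 1792*K^4 + 6528*K^5 - 2304*K^6 - 3072*K^7)*t + (864*K^3 - 4896*K^4 + 6720*K^5 - 4608*K^6 + 3072*K^7) > 0"
proof (rule quad_pos)
  show "(576*K^4 + 2112*K^5 + 2304*K^6 + 768*K^7) > 0" using K by (intro add_pos_pos mult_pos_pos zero_less_power) auto
  define j where "j = K - 2"
  have j: "j \<ge> 0" using K unfolding j_def by simp
  have KJ: "K = j + 2" unfolding j_def by simp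
  have "4*(576*K^4 + 2112*K^5 + 2304*K^6 + 768*K^7)*(864*K^3 - 4896*K^4 + 6720*K^5 - 4608*K^6 + 3072*K^7) - (-3072*K - 11264*K^2 - 15744*K^3 - 1792*K^4 + 6528*K^5 - 2304*K^6 - 3072*K^7)^2 = (23121100800 + 370983567360*j + 1492401520640*j^2 + 3098971602944*j^3 + 4036267737088*j^4 + 3580142059520*j^5 + 2246375440384*j^6 + 1011045588992*j^7 + 325109547008*j^8 + 73003868160*j^9 + 10883629056*j^10 + 968392704*j^11 + 38928384*j^12)"
    unfolding KJ by (simp add: algebra_simps power_def)
  also have "\<dots> > 0" using j by (intro add_pos_nonneg mult_nonneg_nonneg zero_le_power) auto
  finally show "4*(576*K^4 + 2112*K^5 + 2304*K^6 + 768*K^7)*(864*K^3 - 4896*K^4 + 6720*K^5 - 4608*K^6 + 3072*K^7) - (-3072*K - 11264*K^2 - 15744*K^3 - 1792*K^4 + 6528*K^5 - 2304*K^6 - 3072*K^7)^2 > 0" .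
qed

lemma M_eq:
  fixes K t :: real
  assumes K: "K \<ge> 2"
  defines "q0 \<equiv> (1/2 - (2*K-1))/(2*K)" and "q1 \<equiv> (1/2 - 2*K)/(2*K+1)"
      and "q2 \<equiv> (1/2 - (2*K+1))/(2*K+2)" and "q3 \<equiv> (1/2 - (2*K+2))/(2*K+3)"
  shows "(4*t/9)/K^3 + (t/3*q0 - 28/15*(q0*q1*q2) + (10*t-9)/15*(q0*q1) - t^2/12 - 8/5*(q0*q1*q2*q3))
    = - ((576*K^4 + 2112*K^5 + 2304*K^6 + 768*K^7)*t^2 + (-3072*K - 11264*K^2 - 15744*K^3 - 1792*K^4 + 6528*K^5 - 2304*K^6 - 3072*K^7)*t + (864*K^3 - 4896*K^4 + 6720*K^5 - 4608*K^6 + 3072*K^7)) / (36*K^3*(4*K*(4*K+2)*(4*K+4)*(4*K+6)))"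
proof -
  have p: "4*K > 0" "4*K+2 > 0" "4*K+4 > 0" "4*K+6 > 0" using K by auto
  have e0: "q0 = -(4*K-3)/(4*K)" unfolding q0_def using p by (simp add: field_simps)
  have e1: "q1 = -(4*K-1)/(4*K+2)" unfolding q1_def using p by (simp add: field_simps)
  have e2: "q2 = -(4*K+1)/(4*K+4)" unfolding q2_def using p by (simp add: field_simps)
  have e3: "q3 = -(4*K+3)/(4*K+6)" unfolding q3_def using p by (simp add: field_simps)
  have nz: "4*K \<noteq> 0" "4*K+2 \<noteq> 0" "4*K+4 \<noteq> 0" "4*K+6 \<noteq> 0" "K \<noteq> 0" using p by auto
  show ?thesis unfolding e0 e1 e2 e3
    using nz by (simp add: divide_simps) (simp add: algebra_simps power_def)
qed

theorem lemma6:
  fixes k :: nat and \<rho> :: real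
  assumes "k \<ge> 2" and "0 < \<rho>" and "\<rho> < 1"
  shows "a_coef k \<rho> < 0"
proof -
  have k2: "k \<ge> 2" and r0: "0 < \<rho>" and r1: "\<rho> < 1" using assms by auto
  define t where "t = 1 + \<rho>^2"
  define s where "s = sqrt (1 + \<rho>^2)"
  define x where "x = 2*\<rho>/(1+\<rho>^2)"
  define X where "X = x^(2*k)"
  define K where "K = real k"
  define B where "B = ((1/2::real) gchoose (2*k - 1))"
  define e where "e = ((3/2::real) gchoose (k + 1)) * (-1)^(k + 1)"
  define q0 where "q0 = (1/2 - (2*K-1))/(2*K)"
  define q1 where "q1 = (1/2 - 2*K)/(2*K+1)"
  define q2 where "q2 = (1/2 - (2*K+1))/(2*K+2)"
  define q3 where "q3 = (1/2 - (2*K+2))/(2*K+3)"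
  define Mq where "Mq = t/3*q0 - 28/15*(q0*q1*q2) + (10*t-9)/15*(q0*q1) - t^2/12 - 8/5*(q0*q1*q2*q3)"
  have K2: "K \<ge> 2" unfolding K_def using k2 by simp
  have rr: "\<rho>^2 < 1" using power_strict_mono[of \<rho> 1 2] r0 r1 by simp
  have t1: "t > 1" "t < 2" unfolding t_def using r0 rr by auto
  have s2: "s^2 = t" "s > 0" unfolding s_def t_def by (auto simp: add_pos_nonneg)
  have xpos: "x > 0" unfolding x_def using r0 by (simp add: add_pos_nonneg)
  have xt: "x = 2*\<rho>/t" unfolding x_def t_def by simp
  have Xpos: "X > 0" unfolding X_def using xpos by simp
  have eb: "0 \<le> e" "e \<le> B" "0 < B" using eb_bound[OF k2] unfolding e_def B_def by auto
  have k1: "2*k - 1 + 1 = 2*k" using k2 by simp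
  have rK: "real (2*k - 1) = 2*K - 1" unfolding K_def using k2 by (simp add: of_nat_diff)
  have g0: "((1/2::real) gchoose (2*k)) = B*q0"
  proof -
    have "2*k = Suc (2*k-1)" using k2 by simp
    then have "((1/2::real) gchoose (2*k)) = B * (1/2 - real (2*k-1)) / real (Suc (2*k-1))"
      unfolding B_def by (metis gch_Suc)
    also have "\<dots> = B*q0" unfolding q0_def rK using k1 K_def
      by (metis of_nat_Suc of_nat_mult of_nat_numeral Suc_eq_plus1 times_divide_eq_right)
    finally show ?thesis .
  qed
  have g1: "((1/2::real) gchoose (2*k+1)) = B*(q0*q1)"
    using g0 unfolding q1_def K_def by (simp add: gch_Suc add_ac)
  have g2: "((1/2::real) gchoose (2*k+2)) = B*(q0*q1*q2)"
  proof -
    have e: "2*k+2 = Suc (2*k+1)" by simp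
    show ?thesis unfolding e gch_Suc g1 unfolding q2_def K_def by (simp add: add_ac)
  qed
  have g3: "((1/2::real) gchoose (2*k+3)) = B*(q0*q1*q2*q3)"
  proof -
    have e: "2*k+3 = Suc (2*k+2)" by simp
    show ?thesis unfolding e gch_Suc g2 unfolding q3_def K_def by (simp add: add_ac)
  qed
  have h1: "4 * sqrt (1 + \<rho>^2) / 9 * ((3/2::real) gchoose (k+1)) * (-1)^(k+1)
        * (2*\<rho>^2 / (3*(1+\<rho>^2)))^k = (X/s) * ((4*t/9)*e*(t/6)^k)"
  proof -
    have nz: "1 + \<rho>*\<rho> \<noteq> 0" by (smt (verit) zero_le_square)
    have gen: "\<And>T r::real. T \<noteq> 0 \<Longrightarrow> 2*r^2/(3*T) = (2*r/T)^2 * (T/6)"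
      by (simp add: field_simps power2_eq_square)
    have "t \<noteq> 0" using t1 by simp
    from gen[OF this, of \<rho>] have "2*\<rho>^2 / (3*(1+\<rho>^2)) = x^2 * (t/6)" unfolding xt t_def .
    then have "(2*\<rho>^2 / (3*(1+\<rho>^2)))^k = (x^2 * (t/6))^k" by (rule arg_cong)
    also have "\<dots> = X * (t/6)^k" unfolding X_def power_mult power_mult_distrib ..
    finally have "(2*\<rho>^2 / (3*(1+\<rho>^2)))^k = X * (t/6)^k" .
    moreover have gen2: "\<And>G Sg w. 4*s/9*G*Sg*(X*w) = X/s*((4*t/9)*(G*Sg)*w)"
    proof -
      fix G Sg w :: real
      have ts: "t = s*s" using s2 by (simp add: power2_eq_square)
      have "s \<noteq> 0" using s2 by simp
      then show "4*s/9*G*Sg*(X*w) = X/s*((4*t/9)*(G*Sg)*w)" unfolding ts by (simp add: field_simps)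
    qed
    ultimately show ?thesis unfolding e_def s_def[symmetric] by simp
  qed
  have h2: "sqrt (1 + \<rho>^2) / 3 * ((1/2::real) gchoose (2*k)) * (2*\<rho>/(1+\<rho>^2))^(2*k)
        = (X/s) * (t/3*(B*q0))"
    unfolding g0 s_def[symmetric] x_def[symmetric] X_def[symmetric] using s2
    by (simp add: field_simps power2_eq_square)
  have h3: "28 / (15 * sqrt (1 + \<rho>^2)) * ((1/2::real) gchoose (2*k+2)) * (2*\<rho>/(1+\<rho>^2))^(2*k)
        = (X/s) * (28/15*(B*(q0*q1*q2)))"
    unfolding g2 s_def[symmetric] x_def[symmetric] X_def[symmetric] using s2 by (simp add: field_simps)
  have h4: "(10*\<rho>^2 + 1) / (15 * sqrt (1 + \<rho>^2)) * ((1/2::real) gchoose (2*k+1)) * (2*\<rho>/(1+\<rho>^2))^(2*k)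
        = (X/s) * ((10*t-9)/15*(B*(q0*q1)))"
    unfolding g1 s_def[symmetric] x_def[symmetric] X_def[symmetric] t_def using s2 by (simp add: field_simps)
  have h5: "\<rho> * sqrt (1 + \<rho>^2) / 6 * ((1/2::real) gchoose (2*k-1)) * (2*\<rho>/(1+\<rho>^2))^(2*k-1)
        = (X/s) * (t^2/12*B)"
  proof -
    have ek: "2*k = Suc (2*k-1)" using k2 by simp
    have xx: "x * x^(2*k-1) = X" unfolding X_def by (subst ek) (rule power_Suc[symmetric])
    have req: "\<rho> = x*t/2" unfolding xt using t1 by simp
    have ry: "\<rho> * x^(2*k-1) = X * t / 2"
    proof -
      have "\<rho> * x^(2*k-1) = (x * x^(2*k-1)) * t / 2" by (subst req) simp
      then show ?thesis unfolding xx .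
    qed
    moreover have gen: "\<And>y. \<rho>*y = X*t/2 \<Longrightarrow> \<rho> * s / 6 * B * y = (X/s) * (t^2/12*B)"
    proof -
      fix y assume a: "\<rho>*y = X*t/2"
      have ts: "t = s*s" using s2 by (simp add: power2_eq_square)
      have "\<rho> * s / 6 * B * y = s*B*(\<rho>*y)/6" by simp
      also have "\<dots> = s*B*X*t/12" unfolding a by simp
      also have "\<dots> = (X/s) * (t^2/12*B)" using s2 unfolding ts by (simp add: field_simps power2_eq_square)
      finally show "\<rho> * s / 6 * B * y = (X/s) * (t^2/12*B)" .
    qed
    show ?thesis unfolding B_def[symmetric] s_def[symmetric] x_def[symmetric] by (rule gen[OF ry])
  qed
  have h6: "8 / (5 * sqrt (1 + \<rho>^2)) * ((1/2::real) gchoose (2*k+3)) * (2*\<rho>/(1+\<rho>^2))^(2*k)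
        = (X/s) * (8/5*(B*(q0*q1*q2*q3)))"
    unfolding g3 s_def[symmetric] x_def[symmetric] X_def[symmetric] using s2 by (simp add: field_simps)
  have eq: "a_coef k \<rho> = (X/s) * ((4*t/9)*e*(t/6)^k + B*Mq)"
  proof -
    have gen: "\<And>Z a c w d v f u::real. Z*a + Z*(t/3*(B*q0)) - Z*(c*(B*w)) + Z*(d*(B*v)) - Z*(t^2/12*B) - Z*(f*(B*u))
       = Z*(a + B*(t/3*q0 - c*w + d*v - t^2/12 - f*u))" by (simp add: algebra_simps)
    show ?thesis unfolding a_coef_def h1 h2 h3 h4 h5 h6 Mq_def gen by (simp only: mult.assoc)
  qed
  have w: "(t/6)^k \<le> 1/K^3"
  proof -
    have "(t/6)^k \<le> (1/3)^k" using t1 by (intro power_mono) auto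
    also have "\<dots> = 1/3^k" by (simp add: power_divide)
    also have "\<dots> \<le> 1/K^3" unfolding K_def using pow3[OF k2] K2 K_def
      by (intro divide_left_mono) auto
    finally show ?thesis .
  qed
  have w0: "(t/6)^k \<ge> 0" using t1 by simp
  have T1: "(4*t/9)*e*(t/6)^k \<le> B*((4*t/9)/K^3)"
  proof -
    have "e*(t/6)^k \<le> B*(1/K^3)" using eb w w0 by (intro mult_mono) auto
    then have "(4*t/9)*(e*(t/6)^k) \<le> (4*t/9)*(B*(1/K^3))" using t1 by (intro mult_left_mono) auto
    then show ?thesis by (simp add: mult.assoc mult.left_commute)
  qed
  have Mneg: "(4*t/9)/K^3 + Mq < 0"
  proof -
    define N where "N = (576*K^4 + 2112*K^5 + 2304*K^6 + 768*K^7)*t^2 + (-3072*K - 11264*K^2 - 15744*K^3 - 1792*K^4 + 6528*K^5 - 2304*K^6 - 3072*K^7)*t + (864*K^3 - 4896*K^4 + 6720*K^5 - 4608*K^6 + 3072*K^7)"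
    define Dn where "Dn = 36*K^3*(4*K*(4*K+2)*(4*K+4)*(4*K+6))"
    have "(4*t/9)/K^3 + Mq = - N / Dn"
      unfolding Mq_def q0_def q1_def q2_def q3_def N_def Dn_def by (rule M_eq[OF K2])
    moreover have "N > 0" unfolding N_def by (rule G_pos[OF K2])
    moreover have "Dn > 0" unfolding Dn_def using K2 by simp
    ultimately show ?thesis by (metis divide_neg_pos neg_less_0_iff_less)
  qed
  have "(4*t/9)*e*(t/6)^k + B*Mq < 0"
  proof -
    have "B*((4*t/9)/K^3 + Mq) < 0" using eb(3) Mneg by (simp add: mult_pos_neg)
    moreover have "B*((4*t/9)/K^3 + Mq) = B*((4*t/9)/K^3) + B*Mq" by (rule distrib_left)
    ultimately show ?thesis using T1 by linarith
  qed
  moreover have "X/s > 0" using Xpos s2 by simp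
  ultimately show ?thesis unfolding eq by (rule mult_pos_neg[rotated])
qed
end
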